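(* Let $R$ be a ring. Let $(M_\alpha,\varphi_{\alpha\beta})$ be an inverse system of injective left $R$-modules indexed by a countable upward directed poset $I$, with surjective homomorphisms $\varphi_{\alpha\beta}:M_\beta\to M_\alpha$ ($\alpha\le\beta$), and let $M=\varprojlim M_\alpha$ with canonical maps $\pi_\alpha:M\to M_\alpha$. Let $(N_\gamma,\psi_{\delta\gamma})$ be a direct system of projective left $R$-modules indexed by a countable upward directed poset $J$, with one-to-one homomorphisms $\psi_{\delta\gamma}:N_\gamma\to N_\delta$ ($\gamma\le\delta$), and let $N=\varinjlim N_\gamma$ with canonical maps $\iota_\gamma:N_\gamma\to N$. Then for any $\gamma\in J$, $\alpha\in I$ and any homomorphism $f:N_\gamma\to M_\alpha$, there exists a homomorphism $h:N\to M$ such that $f=\pi_\alpha\circ h\circ\iota_\gamma$.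
   Context: Rings are associative with unit, modules are unital. In both the direct and inverse systems the index sets are upward directed; connecting maps of the inverse system go from higher to lower indices, those of the direct system from lower to higher indices. *)

theory Defs
  imports "HOL-Algebra.Module" "HOL-Library.Countable_Set"
begin

text \<open>HOL-Algebra's locale module requires a commutative ring, so left modules
over an arbitrary associative unital ring are defined here.\<close>

definition left_module :: "('a, 'r) ring_scheme \<Rightarrow> ('a, 'b, 'm) module_scheme \<Rightarrow> bool" where
  "left_module R M \<longleftrightarrow> ring R \<and> abelian_group M \<and>
     (\<forall>a\<in>carrier R. \<forall>x\<in>carrier M. a \<odot>\<^bsub>M\<^esub> x \<in> carrier M) \<and>
     (\<forall>a\<in>carrier R. \<forall>b\<in>carrier R. \<forall>x\<in>carrier M.
        (a \<oplus>\<^bsub>R\<^esub> b) \<odot>\<^bsub>M\<^esub> x = (a \<odot>\<^bsub>M\<^esub> x) \<oplus>\<^bsub>M\<^esub> (b \<odot>\<^bsub>M\<^esub> x)) \<and>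
     (\<forall>a\<in>carrier R. \<forall>x\<in>carrier M. \<forall>y\<in>carrier M.
        a \<odot>\<^bsub>M\<^esub> (x \<oplus>\<^bsub>M\<^esub> y) = (a \<odot>\<^bsub>M\<^esub> x) \<oplus>\<^bsub>M\<^esub> (a \<odot>\<^bsub>M\<^esub> y)) \<and>
     (\<forall>a\<in>carrier R. \<forall>b\<in>carrier R. \<forall>x\<in>carrier M.
        (a \<otimes>\<^bsub>R\<^esub> b) \<odot>\<^bsub>M\<^esub> x = a \<odot>\<^bsub>M\<^esub> (b \<odot>\<^bsub>M\<^esub> x)) \<and>
     (\<forall>x\<in>carrier M. \<one>\<^bsub>R\<^esub> \<odot>\<^bsub>M\<^esub> x = x)"

definition mod_hom ::
  "('a, 'r) ring_scheme \<Rightarrow> ('a, 'b, 'm) module_scheme \<Rightarrow> ('a, 'c, 'n) module_scheme \<Rightarrow> ('b \<Rightarrow> 'c) set" where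
  "mod_hom R M N = {f. f \<in> carrier M \<rightarrow> carrier N \<and>
     (\<forall>x\<in>carrier M. \<forall>y\<in>carrier M. f (x \<oplus>\<^bsub>M\<^esub> y) = f x \<oplus>\<^bsub>N\<^esub> f y) \<and>
     (\<forall>a\<in>carrier R. \<forall>x\<in>carrier M. f (a \<odot>\<^bsub>M\<^esub> x) = a \<odot>\<^bsub>N\<^esub> f x)}"

text \<open>In HOL a definition cannot quantify over all types, so the defining
extension/lifting properties are stated relative to test modules whose
carriers live in given types 'x and 'y.\<close>

definition injective_module_wrt ::
  "'x itself \<Rightarrow> 'y itself \<Rightarrow> ('a, 'r) ring_scheme \<Rightarrow> ('a, 'b, 'm) module_scheme \<Rightarrow> bool" where
  "injective_module_wrt (tx :: 'x itself) (ty :: 'y itself) R Q \<longleftrightarrow> left_module R Q \<and>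
     (\<forall>(A :: ('a, 'x) module) (B :: ('a, 'y) module) i f.
        left_module R A \<and> left_module R B \<and> i \<in> mod_hom R A B \<and> inj_on i (carrier A) \<and>
        f \<in> mod_hom R A Q \<longrightarrow>
        (\<exists>g\<in>mod_hom R B Q. \<forall>x\<in>carrier A. g (i x) = f x))"

definition projective_module_wrt ::
  "'x itself \<Rightarrow> 'y itself \<Rightarrow> ('a, 'r) ring_scheme \<Rightarrow> ('a, 'b, 'm) module_scheme \<Rightarrow> bool" where
  "projective_module_wrt (tx :: 'x itself) (ty :: 'y itself) R P \<longleftrightarrow> left_module R P \<and>
     (\<forall>(B :: ('a, 'x) module) (C :: ('a, 'y) module) g f.
        left_module R B \<and> left_module R C \<and> g \<in> mod_hom R B C \<and> g ` carrier B = carrier C \<and>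
        f \<in> mod_hom R P C \<longrightarrow>
        (\<exists>h\<in>mod_hom R P B. \<forall>x\<in>carrier P. g (h x) = f x))"

text \<open>Injectivity: test modules on the ring's own element type suffice (Baer's
criterion: left ideals into R). Projectivity: test with the free module on the
carrier of P (finitely supported functions 'b => 'a) surjecting onto P. So these
are equivalent to the usual (type-unrestricted) notions.\<close>

definition injective_module :: "('a, 'r) ring_scheme \<Rightarrow> ('a, 'b, 'm) module_scheme \<Rightarrow> bool" where
  "injective_module R Q \<longleftrightarrow> injective_module_wrt TYPE('a) TYPE('a) R Q"

definition projective_module :: "('a, 'r) ring_scheme \<Rightarrow> ('a, 'b, 'm) module_scheme \<Rightarrow> bool" where
  "projective_module R P \<longleftrightarrow> projective_module_wrt TYPE('b \<Rightarrow> 'a) TYPE('b) R P"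

definition directed_poset :: "'i set \<Rightarrow> ('i \<Rightarrow> 'i \<Rightarrow> bool) \<Rightarrow> bool" where
  "directed_poset I leq \<longleftrightarrow> I \<noteq> {} \<and>
     (\<forall>a\<in>I. leq a a) \<and>
     (\<forall>a\<in>I. \<forall>b\<in>I. leq a b \<and> leq b a \<longrightarrow> a = b) \<and>
     (\<forall>a\<in>I. \<forall>b\<in>I. \<forall>c\<in>I. leq a b \<and> leq b c \<longrightarrow> leq a c) \<and>
     (\<forall>a\<in>I. \<forall>b\<in>I. \<exists>c\<in>I. leq a c \<and> leq b c)"

definition inverse_system ::
  "('a, 'r) ring_scheme \<Rightarrow> 'i set \<Rightarrow> ('i \<Rightarrow> 'i \<Rightarrow> bool) \<Rightarrow> ('i \<Rightarrow> ('a, 'm) module) \<Rightarrow>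
   ('i \<Rightarrow> 'i \<Rightarrow> 'm \<Rightarrow> 'm) \<Rightarrow> bool" where
  "inverse_system R I leq M phi \<longleftrightarrow> directed_poset I leq \<and>
     (\<forall>a\<in>I. left_module R (M a)) \<and>
     (\<forall>a\<in>I. \<forall>b\<in>I. leq a b \<longrightarrow> phi a b \<in> mod_hom R (M b) (M a)) \<and>
     (\<forall>a\<in>I. \<forall>x\<in>carrier (M a). phi a a x = x) \<and>
     (\<forall>a\<in>I. \<forall>b\<in>I. \<forall>c\<in>I. leq a b \<and> leq b c \<longrightarrow>
        (\<forall>x\<in>carrier (M c). phi a b (phi b c x) = phi a c x))"

definition inverse_limit ::
  "('a, 'r) ring_scheme \<Rightarrow> 'i set \<Rightarrow> ('i \<Rightarrow> 'i \<Rightarrow> bool) \<Rightarrow> ('i \<Rightarrow> ('a, 'm) module) \<Rightarrow>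
   ('i \<Rightarrow> 'i \<Rightarrow> 'm \<Rightarrow> 'm) \<Rightarrow> ('a, 'l) module \<Rightarrow> ('i \<Rightarrow> 'l \<Rightarrow> 'm) \<Rightarrow> bool" where
  "inverse_limit R I leq M phi L pi \<longleftrightarrow> left_module R L \<and>
     (\<forall>a\<in>I. pi a \<in> mod_hom R L (M a)) \<and>
     (\<forall>a\<in>I. \<forall>b\<in>I. leq a b \<longrightarrow> (\<forall>x\<in>carrier L. phi a b (pi b x) = pi a x)) \<and>
     (\<forall>t. (\<forall>a\<in>I. t a \<in> carrier (M a)) \<and>
          (\<forall>a\<in>I. \<forall>b\<in>I. leq a b \<longrightarrow> phi a b (t b) = t a) \<longrightarrow>
          (\<exists>!x. x \<in> carrier L \<and> (\<forall>a\<in>I. pi a x = t a)))"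

definition direct_system ::
  "('a, 'r) ring_scheme \<Rightarrow> 'j set \<Rightarrow> ('j \<Rightarrow> 'j \<Rightarrow> bool) \<Rightarrow> ('j \<Rightarrow> ('a, 'n) module) \<Rightarrow>
   ('j \<Rightarrow> 'j \<Rightarrow> 'n \<Rightarrow> 'n) \<Rightarrow> bool" where
  "direct_system R J leq N psi \<longleftrightarrow> directed_poset J leq \<and>
     (\<forall>g\<in>J. left_module R (N g)) \<and>
     (\<forall>g\<in>J. \<forall>d\<in>J. leq g d \<longrightarrow> psi d g \<in> mod_hom R (N g) (N d)) \<and>
     (\<forall>g\<in>J. \<forall>x\<in>carrier (N g). psi g g x = x) \<and>
     (\<forall>g\<in>J. \<forall>d\<in>J. \<forall>e\<in>J. leq g d \<and> leq d e \<longrightarrow>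
        (\<forall>x\<in>carrier (N g). psi e d (psi d g x) = psi e g x))"

text \<open>L with maps iota is the direct limit (standard description of directed
colimits of modules): iota are compatible homomorphisms, L is the union of their
images, and iota g x = 0 only if x already dies at some later stage.\<close>

definition direct_limit ::
  "('a, 'r) ring_scheme \<Rightarrow> 'j set \<Rightarrow> ('j \<Rightarrow> 'j \<Rightarrow> bool) \<Rightarrow> ('j \<Rightarrow> ('a, 'n) module) \<Rightarrow>
   ('j \<Rightarrow> 'j \<Rightarrow> 'n \<Rightarrow> 'n) \<Rightarrow> ('a, 'k) module \<Rightarrow> ('j \<Rightarrow> 'n \<Rightarrow> 'k) \<Rightarrow> bool" where
  "direct_limit R J leq N psi L iota \<longleftrightarrow> left_module R L \<and>
     (\<forall>g\<in>J. iota g \<in> mod_hom R (N g) L) \<and>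
     (\<forall>g\<in>J. \<forall>d\<in>J. leq g d \<longrightarrow> (\<forall>x\<in>carrier (N g). iota d (psi d g x) = iota g x)) \<and>
     carrier L = (\<Union>g\<in>J. iota g ` carrier (N g)) \<and>
     (\<forall>g\<in>J. \<forall>x\<in>carrier (N g). iota g x = \<zero>\<^bsub>L\<^esub> \<longrightarrow>
        (\<exists>d\<in>J. leq g d \<and> psi d g x = \<zero>\<^bsub>N d\<^esub>))"

end

theory Submission imports Defs begin

lemma lm_ag: "left_module R A \<Longrightarrow> abelian_group A"
  unfolding left_module_def by blast

lemma hom_zero:
  assumes A: "left_module R A" and B: "left_module R B" and f: "f \<in> mod_hom R A B"
  shows "f \<zero>\<^bsub>A\<^esub> = \<zero>\<^bsub>B\<^esub>"
proof -
  interpret A: abelian_group A using lm_ag[OF A] .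
  interpret B: abelian_group B using lm_ag[OF B] .
  have fc: "f \<zero>\<^bsub>A\<^esub> \<in> carrier B" using f unfolding mod_hom_def by auto
  have "f \<zero>\<^bsub>A\<^esub> = f \<zero>\<^bsub>A\<^esub> \<oplus>\<^bsub>B\<^esub> f \<zero>\<^bsub>A\<^esub>"
  proof -
    have "f (\<zero>\<^bsub>A\<^esub> \<oplus>\<^bsub>A\<^esub> \<zero>\<^bsub>A\<^esub>) = f \<zero>\<^bsub>A\<^esub> \<oplus>\<^bsub>B\<^esub> f \<zero>\<^bsub>A\<^esub>"
      using f unfolding mod_hom_def by blast
    thus ?thesis by simp
  qed
  thus ?thesis using fc by simp
qed

lemma hom_eq_kernel:
  assumes A: "left_module R A" and B: "left_module R B" and f: "f \<in> mod_hom R A B"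
    and a: "a \<in> carrier A" and b: "b \<in> carrier A" and e: "f a = f b"
  shows "f (a \<ominus>\<^bsub>A\<^esub> b) = \<zero>\<^bsub>B\<^esub>"
proof -
  interpret A: abelian_group A using lm_ag[OF A] .
  interpret B: abelian_group B using lm_ag[OF B] .
  have c: "a \<ominus>\<^bsub>A\<^esub> b \<in> carrier A" using a b by simp
  have fc: "f (a \<ominus>\<^bsub>A\<^esub> b) \<in> carrier B" "f b \<in> carrier B" using f c b unfolding mod_hom_def by auto
  have "a \<ominus>\<^bsub>A\<^esub> b \<oplus>\<^bsub>A\<^esub> b = a" using a b by (simp add: A.minus_eq A.add.m_assoc A.l_neg)
  moreover have "f (a \<ominus>\<^bsub>A\<^esub> b \<oplus>\<^bsub>A\<^esub> b) = f (a \<ominus>\<^bsub>A\<^esub> b) \<oplus>\<^bsub>B\<^esub> f b"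
    using f c b unfolding mod_hom_def by blast
  ultimately have "f (a \<ominus>\<^bsub>A\<^esub> b) \<oplus>\<^bsub>B\<^esub> f b = f b" using e by simp
  thus ?thesis using fc by simp
qed

lemma minus_zero_eq:
  assumes A: "left_module R A" and a: "a \<in> carrier A" and b: "b \<in> carrier A"
    and e: "a \<ominus>\<^bsub>A\<^esub> b = \<zero>\<^bsub>A\<^esub>"
  shows "a = b"
proof -
  interpret A: abelian_group A using lm_ag[OF A] .
  have "a \<ominus>\<^bsub>A\<^esub> b \<oplus>\<^bsub>A\<^esub> b = a" using a b by (simp add: A.minus_eq A.add.m_assoc A.l_neg)
  thus ?thesis using e b by simp
qed


lemma hom_car: "f \<in> mod_hom R A B \<Longrightarrow> x \<in> carrier A \<Longrightarrow> f x \<in> carrier B"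
  unfolding mod_hom_def by auto
lemma hom_add: "f \<in> mod_hom R A B \<Longrightarrow> x \<in> carrier A \<Longrightarrow> y \<in> carrier A \<Longrightarrow> f (x \<oplus>\<^bsub>A\<^esub> y) = f x \<oplus>\<^bsub>B\<^esub> f y"
  unfolding mod_hom_def by auto
lemma hom_smult: "f \<in> mod_hom R A B \<Longrightarrow> r \<in> carrier R \<Longrightarrow> x \<in> carrier A \<Longrightarrow> f (r \<odot>\<^bsub>A\<^esub> x) = r \<odot>\<^bsub>B\<^esub> f x"
  unfolding mod_hom_def by auto
lemma lm_add_closed: assumes A: "left_module R A" shows "x \<in> carrier A \<Longrightarrow> y \<in> carrier A \<Longrightarrow> x \<oplus>\<^bsub>A\<^esub> y \<in> carrier A"
proof - interpret abelian_group A using lm_ag[OF A] . show "x \<in> carrier A \<Longrightarrow> y \<in> carrier A \<Longrightarrow> x \<oplus>\<^bsub>A\<^esub> y \<in> carrier A" by simp qed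
lemma lm_smult_closed: "left_module R A \<Longrightarrow> r \<in> carrier R \<Longrightarrow> x \<in> carrier A \<Longrightarrow> r \<odot>\<^bsub>A\<^esub> x \<in> carrier A"
  unfolding left_module_def by blast
lemma lm_zero_closed: assumes A: "left_module R A" shows "\<zero>\<^bsub>A\<^esub> \<in> carrier A"
proof - interpret abelian_group A using lm_ag[OF A] . show ?thesis by simp qed
lemma lm_minus_closed: assumes A: "left_module R A" shows "x \<in> carrier A \<Longrightarrow> y \<in> carrier A \<Longrightarrow> x \<ominus>\<^bsub>A\<^esub> y \<in> carrier A"
proof - interpret abelian_group A using lm_ag[OF A] . show "x \<in> carrier A \<Longrightarrow> y \<in> carrier A \<Longrightarrow> x \<ominus>\<^bsub>A\<^esub> y \<in> carrier A" by simp qed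



theorem lemma5:
  fixes R :: "'a ring"
    and I :: "'i set" and leI :: "'i \<Rightarrow> 'i \<Rightarrow> bool"
    and M :: "'i \<Rightarrow> ('a, 'm) module" and phi :: "'i \<Rightarrow> 'i \<Rightarrow> 'm \<Rightarrow> 'm"
    and Mlim :: "('a, 'l) module" and pi :: "'i \<Rightarrow> 'l \<Rightarrow> 'm"
    and J :: "'j set" and leJ :: "'j \<Rightarrow> 'j \<Rightarrow> bool"
    and N :: "'j \<Rightarrow> ('a, 'n) module" and psi :: "'j \<Rightarrow> 'j \<Rightarrow> 'n \<Rightarrow> 'n"
    and Nlim :: "('a, 'k) module" and iota :: "'j \<Rightarrow> 'n \<Rightarrow> 'k"
    and \<gamma> :: 'j and \<alpha> :: 'i and f :: "'n \<Rightarrow> 'm"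
  assumes R: "ring R"
    and I_countable: "countable I"
    and inv_sys: "inverse_system R I leI M phi"
    and phi_surj: "\<forall>a\<in>I. \<forall>b\<in>I. leI a b \<longrightarrow> phi a b ` carrier (M b) = carrier (M a)"
    and M_inj: "\<forall>a\<in>I. injective_module R (M a)"
    and M_inj_N: "\<forall>a\<in>I. injective_module_wrt TYPE('n) TYPE('n) R (M a)"
    and Mlim_lim: "inverse_limit R I leI M phi Mlim pi"
    and J_countable: "countable J"
    and dir_sys: "direct_system R J leJ N psi"
    and psi_inj: "\<forall>g\<in>J. \<forall>d\<in>J. leJ g d \<longrightarrow> inj_on (psi d g) (carrier (N g))"
    and N_proj: "\<forall>g\<in>J. projective_module R (N g)"
    and N_proj_M: "\<forall>g\<in>J. projective_module_wrt TYPE('m) TYPE('m) R (N g)"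
    and Nlim_lim: "direct_limit R J leJ N psi Nlim iota"
    and \<gamma>: "\<gamma> \<in> J" and \<alpha>: "\<alpha> \<in> I"
    and f: "f \<in> mod_hom R (N \<gamma>) (M \<alpha>)"
  shows "\<exists>h \<in> mod_hom R Nlim Mlim. \<forall>x\<in>carrier (N \<gamma>). f x = pi \<alpha> (h (iota \<gamma> x))"
  proof -
  have dJ: "directed_poset J leJ" and NM: "\<And>g. g\<in>J \<Longrightarrow> left_module R (N g)"
    and psi_hom: "\<And>g d. g\<in>J \<Longrightarrow> d\<in>J \<Longrightarrow> leJ g d \<Longrightarrow> psi d g \<in> mod_hom R (N g) (N d)"
    and psi_id: "\<And>g x. g\<in>J \<Longrightarrow> x\<in>carrier (N g) \<Longrightarrow> psi g g x = x"
    and psi_comp: "\<And>g d e x. g\<in>J \<Longrightarrow> d\<in>J \<Longrightarrow> e\<in>J \<Longrightarrow> leJ g d \<Longrightarrow> leJ d e \<Longrightarrow> x\<in>carrier (N g) \<Longrightarrow> psi e d (psi d g x) = psi e g x"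
    using dir_sys unfolding direct_system_def by auto
  have dI: "directed_poset I leI" and MM: "\<And>a. a\<in>I \<Longrightarrow> left_module R (M a)"
    and phi_hom: "\<And>a b. a\<in>I \<Longrightarrow> b\<in>I \<Longrightarrow> leI a b \<Longrightarrow> phi a b \<in> mod_hom R (M b) (M a)"
    and phi_id: "\<And>a x. a\<in>I \<Longrightarrow> x\<in>carrier (M a) \<Longrightarrow> phi a a x = x"
    and phi_comp: "\<And>a b c x. a\<in>I \<Longrightarrow> b\<in>I \<Longrightarrow> c\<in>I \<Longrightarrow> leI a b \<Longrightarrow> leI b c \<Longrightarrow> x\<in>carrier (M c) \<Longrightarrow> phi a b (phi b c x) = phi a c x"
    using inv_sys unfolding inverse_system_def by auto
  have Mlm: "left_module R Mlim" and pi_hom: "\<And>a. a\<in>I \<Longrightarrow> pi a \<in> mod_hom R Mlim (M a)"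
    and lim_univ: "\<And>t. (\<forall>a\<in>I. t a \<in> carrier (M a)) \<Longrightarrow> (\<forall>a\<in>I. \<forall>b\<in>I. leI a b \<longrightarrow> phi a b (t b) = t a) \<Longrightarrow>
          (\<exists>!x. x \<in> carrier Mlim \<and> (\<forall>a\<in>I. pi a x = t a))"
    using Mlim_lim unfolding inverse_limit_def by auto
  have Nlm: "left_module R Nlim" and iota_hom: "\<And>g. g\<in>J \<Longrightarrow> iota g \<in> mod_hom R (N g) Nlim"
    and iota_comp: "\<And>g d x. g\<in>J \<Longrightarrow> d\<in>J \<Longrightarrow> leJ g d \<Longrightarrow> x\<in>carrier (N g) \<Longrightarrow> iota d (psi d g x) = iota g x"
    and Ncar: "carrier Nlim = (\<Union>g\<in>J. iota g ` carrier (N g))"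
    and iota_ker: "\<And>g x. g\<in>J \<Longrightarrow> x\<in>carrier (N g) \<Longrightarrow> iota g x = \<zero>\<^bsub>Nlim\<^esub> \<Longrightarrow> (\<exists>d\<in>J. leJ g d \<and> psi d g x = \<zero>\<^bsub>N d\<^esub>)"
    using Nlim_lim unfolding direct_limit_def by auto
  have J_ne: "J \<noteq> {}" and reflJ: "\<And>a. a\<in>J \<Longrightarrow> leJ a a"
    and transJ: "\<And>a b c. a\<in>J \<Longrightarrow> b\<in>J \<Longrightarrow> c\<in>J \<Longrightarrow> leJ a b \<Longrightarrow> leJ b c \<Longrightarrow> leJ a c"
    and dirJ: "\<And>a b. a\<in>J \<Longrightarrow> b\<in>J \<Longrightarrow> \<exists>c\<in>J. leJ a c \<and> leJ b c"
    using dJ unfolding directed_poset_def by blast+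
  have I_ne: "I \<noteq> {}" and reflI: "\<And>a. a\<in>I \<Longrightarrow> leI a a"
    and transI: "\<And>a b c. a\<in>I \<Longrightarrow> b\<in>I \<Longrightarrow> c\<in>I \<Longrightarrow> leI a b \<Longrightarrow> leI b c \<Longrightarrow> leI a c"
    and dirI: "\<And>a b. a\<in>I \<Longrightarrow> b\<in>I \<Longrightarrow> \<exists>c\<in>I. leI a c \<and> leI b c"
    using dI unfolding directed_poset_def by blast+
  obtain eJ :: "nat \<Rightarrow> 'j" where eJ: "range eJ = J" using range_from_nat_into[OF J_ne J_countable] by blast
  obtain eI :: "nat \<Rightarrow> 'i" where eI: "range eI = I" using range_from_nat_into[OF I_ne I_countable] by blast

  define gs where "gs = rec_nat \<gamma> (\<lambda>n c. SOME d. d \<in> J \<and> leJ c d \<and> leJ (eJ n) d)"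
  have gs0: "gs 0 = \<gamma>" and gsS: "\<And>n. gs (Suc n) = (SOME d. d \<in> J \<and> leJ (gs n) d \<and> leJ (eJ n) d)"
    by (simp_all add: gs_def)
  have eJJ: "eJ n \<in> J" for n using eJ by blast
  have ex_gs: "\<exists>d. d \<in> J \<and> leJ (gs n) d \<and> leJ (eJ n) d" if "gs n \<in> J" for n
    using dirJ[OF that eJJ[of n]] by blast
  have gsJ: "gs n \<in> J" for n
  proof (induction n)
    case 0 then show ?case using gs0 \<gamma> by simp
  next
    case (Suc n) then show ?case unfolding gsS using someI_ex[OF ex_gs[OF Suc]] by blast
  qed
  have gs_step: "leJ (gs n) (gs (Suc n)) \<and> leJ (eJ n) (gs (Suc n))" for n
    unfolding gsS using someI_ex[OF ex_gs[OF gsJ]] by blast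
  have gs_mono: "leJ (gs n) (gs m)" if "n \<le> m" for n m
    using that
  proof (induction m rule: dec_induct)
    case base then show ?case using reflJ gsJ by blast
  next
    case (step m) then show ?case using transJ[OF gsJ gsJ gsJ step.IH gs_step[THEN conjunct1]] by blast
  qed
  have gs_cof: "\<exists>k. \<forall>m\<ge>k. leJ g (gs m)" if gJ: "g \<in> J" for g
  proof -
    obtain n where n: "g = eJ n" using gJ eJ by blast
    have "leJ g (gs m)" if "m \<ge> Suc n" for m
      using transJ[OF _ gsJ gsJ _ gs_mono[OF that]] gs_step[of n] eJJ n by blast
    thus ?thesis by blast
  qed

  define as where "as = rec_nat \<alpha> (\<lambda>n c. SOME d. d \<in> I \<and> leI c d \<and> leI (eI n) d)"
  have as0: "as 0 = \<alpha>" and asS: "\<And>n. as (Suc n) = (SOME d. d \<in> I \<and> leI (as n) d \<and> leI (eI n) d)"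
    by (simp_all add: as_def)
  have eII: "eI n \<in> I" for n using eI by blast
  have ex_as: "\<exists>d. d \<in> I \<and> leI (as n) d \<and> leI (eI n) d" if "as n \<in> I" for n
    using dirI[OF that eII[of n]] by blast
  have asI: "as n \<in> I" for n
  proof (induction n)
    case 0 then show ?case using as0 \<alpha> by simp
  next
    case (Suc n) then show ?case unfolding asS using someI_ex[OF ex_as[OF Suc]] by blast
  qed
  have as_step: "leI (as n) (as (Suc n)) \<and> leI (eI n) (as (Suc n))" for n
    unfolding asS using someI_ex[OF ex_as[OF asI]] by blast
  have as_mono: "leI (as n) (as m)" if "n \<le> m" for n m
    using that
  proof (induction m rule: dec_induct)
    case base then show ?case using reflI asI by blast
  next
    case (step m) then show ?case using transI[OF asI asI asI step.IH as_step[THEN conjunct1]] by blast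
  qed
  have as_cof: "\<exists>k. \<forall>m\<ge>k. leI a (as m)" if aI: "a \<in> I" for a
  proof -
    obtain n where n: "a = eI n" using aI eI by blast
    have "leI a (as m)" if "m \<ge> Suc n" for m
      using transI[OF _ asI asI _ as_mono[OF that]] as_step[of n] eII n by blast
    thus ?thesis by blast
  qed

  have Ngs: "left_module R (N (gs n))" for n using NM gsJ by blast
  have Mas: "left_module R (M (as n))" for n using MM asI by blast
  have psi_gs: "psi (gs m) (gs n) \<in> mod_hom R (N (gs n)) (N (gs m))" if "n \<le> m" for n m
    using psi_hom[OF gsJ gsJ gs_mono[OF that]] .
  have phi_as: "phi (as n) (as m) \<in> mod_hom R (M (as m)) (M (as n))" if "n \<le> m" for n m
    using phi_hom[OF asI asI as_mono[OF that]] .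
  have step_ex: "\<exists>G. G \<in> mod_hom R (N (gs (Suc n))) (M (as (Suc n))) \<and>
      (\<forall>x\<in>carrier (N (gs n)). phi (as n) (as (Suc n)) (G (psi (gs (Suc n)) (gs n) x)) = F x)"
    if F: "F \<in> mod_hom R (N (gs n)) (M (as n))" for n F
  proof -
    have injw: "injective_module_wrt TYPE('n) TYPE('n) R (M (as n))" using M_inj_N asI by blast
    have H: "\<And>(A::('a,'n) module) (B::('a,'n) module) i f. left_module R A \<Longrightarrow> left_module R B \<Longrightarrow>
       i \<in> mod_hom R A B \<Longrightarrow> inj_on i (carrier A) \<Longrightarrow> f \<in> mod_hom R A (M (as n)) \<Longrightarrow>
       \<exists>g\<in>mod_hom R B (M (as n)). \<forall>x\<in>carrier A. g (i x) = f x"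
      using injw unfolding injective_module_wrt_def by blast
    have ij: "inj_on (psi (gs (Suc n)) (gs n)) (carrier (N (gs n)))"
      using psi_inj gsJ gs_step by blast
    obtain g where g: "g \<in> mod_hom R (N (gs (Suc n))) (M (as n))"
      and gx: "\<forall>x\<in>carrier (N (gs n)). g (psi (gs (Suc n)) (gs n) x) = F x"
      using H[OF Ngs Ngs psi_gs[of n "Suc n"] ij F] by auto
    have projw: "projective_module_wrt TYPE('m) TYPE('m) R (N (gs (Suc n)))" using N_proj_M gsJ by blast
    have P: "\<And>(B::('a,'m) module) (C::('a,'m) module) q f. left_module R B \<Longrightarrow> left_module R C \<Longrightarrow>
       q \<in> mod_hom R B C \<Longrightarrow> q ` carrier B = carrier C \<Longrightarrow> f \<in> mod_hom R (N (gs (Suc n))) C \<Longrightarrow>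
       \<exists>h\<in>mod_hom R (N (gs (Suc n))) B. \<forall>x\<in>carrier (N (gs (Suc n))). q (h x) = f x"
      using projw unfolding projective_module_wrt_def by blast
    have sj: "phi (as n) (as (Suc n)) ` carrier (M (as (Suc n))) = carrier (M (as n))"
      using phi_surj asI as_step by blast
    obtain G where G: "G \<in> mod_hom R (N (gs (Suc n))) (M (as (Suc n)))"
      and Gx: "\<forall>x\<in>carrier (N (gs (Suc n))). phi (as n) (as (Suc n)) (G x) = g x"
      using P[OF Mas Mas phi_as[of n "Suc n"] sj g] by auto
    have "\<forall>x\<in>carrier (N (gs n)). phi (as n) (as (Suc n)) (G (psi (gs (Suc n)) (gs n) x)) = F x"
      using Gx gx hom_car[OF psi_gs[of n "Suc n"]] by simp
    thus ?thesis using G by blast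
  qed
  define fs where "fs = rec_nat f (\<lambda>n F. SOME G. G \<in> mod_hom R (N (gs (Suc n))) (M (as (Suc n))) \<and>
      (\<forall>x\<in>carrier (N (gs n)). phi (as n) (as (Suc n)) (G (psi (gs (Suc n)) (gs n) x)) = F x))"
  have fs0: "fs 0 = f" and fsS: "\<And>n. fs (Suc n) = (SOME G. G \<in> mod_hom R (N (gs (Suc n))) (M (as (Suc n))) \<and>
      (\<forall>x\<in>carrier (N (gs n)). phi (as n) (as (Suc n)) (G (psi (gs (Suc n)) (gs n) x)) = fs n x))"
    by (simp_all add: fs_def)
  have fs_hom: "fs n \<in> mod_hom R (N (gs n)) (M (as n))" for n
  proof (induction n)
    case 0 then show ?case using f fs0 gs0 as0 by simp
  next
    case (Suc n) then show ?case unfolding fsS using someI_ex[OF step_ex[OF Suc]] by blast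
  qed
  have fs_step: "\<forall>x\<in>carrier (N (gs n)). phi (as n) (as (Suc n)) (fs (Suc n) (psi (gs (Suc n)) (gs n) x)) = fs n x" for n
    unfolding fsS using someI_ex[OF step_ex[OF fs_hom]] by blast
  have fs_car: "x \<in> carrier (N (gs n)) \<Longrightarrow> fs n x \<in> carrier (M (as n))" for n x
    using hom_car[OF fs_hom] .
  have psi_car: "x \<in> carrier (N (gs n)) \<Longrightarrow> n \<le> m \<Longrightarrow> psi (gs m) (gs n) x \<in> carrier (N (gs m))" for n m x
    using hom_car[OF psi_gs] by blast
  have long: "phi (as n) (as m) (fs m (psi (gs m) (gs n) x)) = fs n x"
    if nm: "n \<le> m" and x: "x \<in> carrier (N (gs n))" for n m x
    using nm
  proof (induction m rule: dec_induct)
    case base then show ?case using psi_id[OF gsJ x] phi_id[OF asI fs_car[OF x]] by simp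
  next
    case (step m)
    have y: "psi (gs m) (gs n) x \<in> carrier (N (gs m))" using psi_car[OF x step.hyps(1)] .
    have e1: "psi (gs (Suc m)) (gs n) x = psi (gs (Suc m)) (gs m) (psi (gs m) (gs n) x)"
      using psi_comp[OF gsJ gsJ gsJ gs_mono[OF step.hyps(1)] gs_step[THEN conjunct1] x] by simp
    have z: "fs (Suc m) (psi (gs (Suc m)) (gs n) x) \<in> carrier (M (as (Suc m)))"
      using fs_car psi_car[OF x] step.hyps(1) by simp
    have "phi (as n) (as (Suc m)) (fs (Suc m) (psi (gs (Suc m)) (gs n) x))
        = phi (as n) (as m) (phi (as m) (as (Suc m)) (fs (Suc m) (psi (gs (Suc m)) (gs n) x)))"
      using phi_comp[OF asI asI asI as_mono[OF step.hyps(1)] as_step[THEN conjunct1] z] by simp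
    also have "\<dots> = phi (as n) (as m) (fs m (psi (gs m) (gs n) x))"
      using fs_step y e1 by simp
    also have "\<dots> = fs n x" using step.IH .
    finally show ?case .
  qed
  have kern: "psi (gs m) (gs n) x = x'"
    if nm: "n \<le> m" and x: "x \<in> carrier (N (gs n))" and x': "x' \<in> carrier (N (gs m))"
      and e: "iota (gs n) x = iota (gs m) x'" for n m x x'
  proof -
    let ?u = "psi (gs m) (gs n) x"
    have u: "?u \<in> carrier (N (gs m))" using psi_car[OF x nm] .
    have "iota (gs m) ?u = iota (gs m) x'" using iota_comp[OF gsJ gsJ gs_mono[OF nm] x] e by simp
    hence k: "iota (gs m) (?u \<ominus>\<^bsub>N (gs m)\<^esub> x') = \<zero>\<^bsub>Nlim\<^esub>"
      using hom_eq_kernel[OF Ngs Nlm iota_hom[OF gsJ] u x'] by simp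
    have w: "?u \<ominus>\<^bsub>N (gs m)\<^esub> x' \<in> carrier (N (gs m))" using lm_minus_closed[OF Ngs u x'] .
    obtain d where d: "d \<in> J" "leJ (gs m) d" "psi d (gs m) (?u \<ominus>\<^bsub>N (gs m)\<^esub> x') = \<zero>\<^bsub>N d\<^esub>"
      using iota_ker[OF gsJ w k] by blast
    have z: "psi d (gs m) \<zero>\<^bsub>N (gs m)\<^esub> = \<zero>\<^bsub>N d\<^esub>"
      using hom_zero[OF Ngs NM[OF d(1)] psi_hom[OF gsJ d(1) d(2)]] .
    have "inj_on (psi d (gs m)) (carrier (N (gs m)))" using psi_inj gsJ d by blast
    hence "?u \<ominus>\<^bsub>N (gs m)\<^esub> x' = \<zero>\<^bsub>N (gs m)\<^esub>"
      using d(3) z w lm_zero_closed[OF Ngs] unfolding inj_on_def by metis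
    thus ?thesis using minus_zero_eq[OF Ngs u x'] by blast
  qed
  have rep: "\<exists>k. \<forall>m\<ge>k. \<exists>x\<in>carrier (N (gs m)). iota (gs m) x = y" if y: "y \<in> carrier Nlim" for y
  proof -
    obtain g x0 where g: "g \<in> J" and x0: "x0 \<in> carrier (N g)" and yx: "y = iota g x0"
      using y Ncar by blast
    obtain k where k: "\<forall>m\<ge>k. leJ g (gs m)" using gs_cof[OF g] by blast
    have "\<exists>x\<in>carrier (N (gs m)). iota (gs m) x = y" if "m \<ge> k" for m
    proof
      show "psi (gs m) g x0 \<in> carrier (N (gs m))"
        using hom_car[OF psi_hom[OF g gsJ k[rule_format, OF that]] x0] .
      show "iota (gs m) (psi (gs m) g x0) = y"
        using iota_comp[OF g gsJ k[rule_format, OF that] x0] yx by simp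
    qed
    thus ?thesis by blast
  qed
  define T where "T a y = (SOME v. \<exists>m. \<exists>x\<in>carrier (N (gs m)). leI a (as m) \<and> iota (gs m) x = y \<and> v = phi a (as m) (fs m x))" for a y
  have uniq: "phi a (as m) (fs m x) = phi a (as m') (fs m' x')"
    if a: "a \<in> I" and x: "x \<in> carrier (N (gs m))" and x': "x' \<in> carrier (N (gs m'))"
      and am: "leI a (as m)" and am': "leI a (as m')" and e: "iota (gs m) x = iota (gs m') x'"
      and mm: "m \<le> m'" for a m m' x x'
  proof -
    have x'e: "x' = psi (gs m') (gs m) x" using kern[OF mm x x' e] by simp
    have "phi a (as m') (fs m' x') = phi a (as m) (phi (as m) (as m') (fs m' x'))"
      using phi_comp[OF a asI asI am as_mono[OF mm] fs_car[OF x']] by simp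
    also have "\<dots> = phi a (as m) (fs m x)" using long[OF mm x] x'e by simp
    finally show ?thesis by simp
  qed
  have Tkey: "T a (iota (gs m) x) = phi a (as m) (fs m x)"
    if a: "a \<in> I" and x: "x \<in> carrier (N (gs m))" and am: "leI a (as m)" for a m x
  proof -
    have "\<exists>v. \<exists>m'. \<exists>x'\<in>carrier (N (gs m')). leI a (as m') \<and> iota (gs m') x' = iota (gs m) x \<and> v = phi a (as m') (fs m' x')"
      using x am by blast
    from someI_ex[OF this] obtain m' x' where x': "x' \<in> carrier (N (gs m'))" and am': "leI a (as m')"
      and e: "iota (gs m') x' = iota (gs m) x" and Te: "T a (iota (gs m) x) = phi a (as m') (fs m' x')"
      unfolding T_def by blast
    show ?thesis
    proof (cases "m \<le> m'")
      case True then show ?thesis using uniq[OF a x x' am am' e[symmetric]] Te by simp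
    next
      case False then show ?thesis using uniq[OF a x' x am' am e] Te by simp
    qed
  qed
  have big: "\<exists>m. leI a (as m) \<and> (\<exists>x\<in>carrier (N (gs m)). iota (gs m) x = y) \<and> (\<exists>x\<in>carrier (N (gs m)). iota (gs m) x = z)"
    if a: "a \<in> I" and y: "y \<in> carrier Nlim" and z: "z \<in> carrier Nlim" for a y z
  proof -
    obtain k1 where k1: "\<forall>m\<ge>k1. \<exists>x\<in>carrier (N (gs m)). iota (gs m) x = y" using rep[OF y] by blast
    obtain k2 where k2: "\<forall>m\<ge>k2. \<exists>x\<in>carrier (N (gs m)). iota (gs m) x = z" using rep[OF z] by blast
    obtain k3 where k3: "\<forall>m\<ge>k3. leI a (as m)" using as_cof[OF a] by blast
    have "leI a (as (max k1 (max k2 k3)))" using k3 by simp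
    moreover have "\<exists>x\<in>carrier (N (gs (max k1 (max k2 k3)))). iota (gs (max k1 (max k2 k3))) x = y" using k1 by simp
    moreover have "\<exists>x\<in>carrier (N (gs (max k1 (max k2 k3)))). iota (gs (max k1 (max k2 k3))) x = z" using k2 by simp
    ultimately show ?thesis by blast
  qed
  have thread: "(\<forall>a\<in>I. T a y \<in> carrier (M a)) \<and> (\<forall>a\<in>I. \<forall>b\<in>I. leI a b \<longrightarrow> phi a b (T b y) = T a y)"
    if y: "y \<in> carrier Nlim" for y
  proof (intro conjI ballI impI)
    fix a assume a: "a \<in> I"
    obtain m x where am: "leI a (as m)" and x: "x \<in> carrier (N (gs m))" and xy: "iota (gs m) x = y"
      using big[OF a y y] by blast
    show "T a y \<in> carrier (M a)"
      using Tkey[OF a x am] xy hom_car[OF phi_hom[OF a asI am] fs_car[OF x]] by simp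
  next
    fix a b assume a: "a \<in> I" and b: "b \<in> I" and ab: "leI a b"
    obtain m x where bm: "leI b (as m)" and x: "x \<in> carrier (N (gs m))" and xy: "iota (gs m) x = y"
      using big[OF b y y] by blast
    have am: "leI a (as m)" using transI[OF a b asI ab bm] .
    show "phi a b (T b y) = T a y"
      using Tkey[OF a x am] Tkey[OF b x bm] xy phi_comp[OF a b asI ab bm fs_car[OF x]] by simp
  qed
  define h where "h y = (THE z. z \<in> carrier Mlim \<and> (\<forall>a\<in>I. pi a z = T a y))" for y
  have hy: "h y \<in> carrier Mlim \<and> (\<forall>a\<in>I. pi a (h y) = T a y)" if y: "y \<in> carrier Nlim" for y
    unfolding h_def using theI'[OF lim_univ[OF thread[OF y, THEN conjunct1] thread[OF y, THEN conjunct2]]] .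
  have heq: "h y = z" if y: "y \<in> carrier Nlim" and z: "z \<in> carrier Mlim" and zt: "\<forall>a\<in>I. pi a z = T a y" for y z
    using lim_univ[OF thread[OF y, THEN conjunct1] thread[OF y, THEN conjunct2]] hy[OF y] z zt by blast
  have hhom: "h \<in> mod_hom R Nlim Mlim"
    unfolding mod_hom_def
  proof (intro CollectI conjI ballI)
    show "h \<in> carrier Nlim \<rightarrow> carrier Mlim" using hy by blast
  next
    fix y z assume y: "y \<in> carrier Nlim" and z: "z \<in> carrier Nlim"
    have yz: "y \<oplus>\<^bsub>Nlim\<^esub> z \<in> carrier Nlim" using lm_add_closed[OF Nlm y z] .
    have c: "h y \<oplus>\<^bsub>Mlim\<^esub> h z \<in> carrier Mlim" using lm_add_closed[OF Mlm] hy y z by blast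
    have "\<forall>a\<in>I. pi a (h y \<oplus>\<^bsub>Mlim\<^esub> h z) = T a (y \<oplus>\<^bsub>Nlim\<^esub> z)"
    proof
      fix a assume a: "a \<in> I"
      obtain m x1 x2 where am: "leI a (as m)" and x1: "x1 \<in> carrier (N (gs m))" and e1: "iota (gs m) x1 = y"
        and x2: "x2 \<in> carrier (N (gs m))" and e2: "iota (gs m) x2 = z"
        using big[OF a y z] by blast
      have x12: "x1 \<oplus>\<^bsub>N (gs m)\<^esub> x2 \<in> carrier (N (gs m))" using lm_add_closed[OF Ngs x1 x2] .
      have e12: "iota (gs m) (x1 \<oplus>\<^bsub>N (gs m)\<^esub> x2) = y \<oplus>\<^bsub>Nlim\<^esub> z"
        using hom_add[OF iota_hom[OF gsJ] x1 x2] e1 e2 by simp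
      have "T a (y \<oplus>\<^bsub>Nlim\<^esub> z) = phi a (as m) (fs m (x1 \<oplus>\<^bsub>N (gs m)\<^esub> x2))"
        using Tkey[OF a x12 am] e12 by simp
      also have "\<dots> = phi a (as m) (fs m x1) \<oplus>\<^bsub>M a\<^esub> phi a (as m) (fs m x2)"
        using hom_add[OF fs_hom x1 x2] hom_add[OF phi_hom[OF a asI am] fs_car[OF x1] fs_car[OF x2]] by simp
      also have "\<dots> = T a y \<oplus>\<^bsub>M a\<^esub> T a z" using Tkey[OF a x1 am] Tkey[OF a x2 am] e1 e2 by simp
      also have "\<dots> = pi a (h y) \<oplus>\<^bsub>M a\<^esub> pi a (h z)" using hy y z a by simp
      also have "\<dots> = pi a (h y \<oplus>\<^bsub>Mlim\<^esub> h z)" using hom_add[OF pi_hom[OF a]] hy y z by simp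
      finally show "pi a (h y \<oplus>\<^bsub>Mlim\<^esub> h z) = T a (y \<oplus>\<^bsub>Nlim\<^esub> z)" by simp
    qed
    thus "h (y \<oplus>\<^bsub>Nlim\<^esub> z) = h y \<oplus>\<^bsub>Mlim\<^esub> h z" using heq[OF yz c] by blast
  next
    fix r y assume r: "r \<in> carrier R" and y: "y \<in> carrier Nlim"
    have ry: "r \<odot>\<^bsub>Nlim\<^esub> y \<in> carrier Nlim" using lm_smult_closed[OF Nlm r y] .
    have c: "r \<odot>\<^bsub>Mlim\<^esub> h y \<in> carrier Mlim" using lm_smult_closed[OF Mlm r] hy y by blast
    have "\<forall>a\<in>I. pi a (r \<odot>\<^bsub>Mlim\<^esub> h y) = T a (r \<odot>\<^bsub>Nlim\<^esub> y)"
    proof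
      fix a assume a: "a \<in> I"
      obtain m x1 where am: "leI a (as m)" and x1: "x1 \<in> carrier (N (gs m))" and e1: "iota (gs m) x1 = y"
        using big[OF a y y] by blast
      have x12: "r \<odot>\<^bsub>N (gs m)\<^esub> x1 \<in> carrier (N (gs m))" using lm_smult_closed[OF Ngs r x1] .
      have e12: "iota (gs m) (r \<odot>\<^bsub>N (gs m)\<^esub> x1) = r \<odot>\<^bsub>Nlim\<^esub> y"
        using hom_smult[OF iota_hom[OF gsJ] r x1] e1 by simp
      have "T a (r \<odot>\<^bsub>Nlim\<^esub> y) = phi a (as m) (fs m (r \<odot>\<^bsub>N (gs m)\<^esub> x1))"
        using Tkey[OF a x12 am] e12 by simp
      also have "\<dots> = r \<odot>\<^bsub>M a\<^esub> phi a (as m) (fs m x1)"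
        using hom_smult[OF fs_hom r x1] hom_smult[OF phi_hom[OF a asI am] r fs_car[OF x1]] by simp
      also have "\<dots> = r \<odot>\<^bsub>M a\<^esub> T a y" using Tkey[OF a x1 am] e1 by simp
      also have "\<dots> = r \<odot>\<^bsub>M a\<^esub> pi a (h y)" using hy y a by simp
      also have "\<dots> = pi a (r \<odot>\<^bsub>Mlim\<^esub> h y)" using hom_smult[OF pi_hom[OF a] r] hy y by simp
      finally show "pi a (r \<odot>\<^bsub>Mlim\<^esub> h y) = T a (r \<odot>\<^bsub>Nlim\<^esub> y)" by simp
    qed
    thus "h (r \<odot>\<^bsub>Nlim\<^esub> y) = r \<odot>\<^bsub>Mlim\<^esub> h y" using heq[OF ry c] by blast
  qed
  have "f x = pi \<alpha> (h (iota \<gamma> x))" if x: "x \<in> carrier (N \<gamma>)" for x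
  proof -
    have x0: "x \<in> carrier (N (gs 0))" using x gs0 by simp
    have "iota \<gamma> x \<in> carrier Nlim" using hom_car[OF iota_hom[OF \<gamma>] x] .
    hence "pi \<alpha> (h (iota \<gamma> x)) = T \<alpha> (iota (gs 0) x)" using hy \<alpha> gs0 by simp
    also have "\<dots> = phi \<alpha> (as 0) (fs 0 x)" using Tkey[OF \<alpha> x0] as0 reflI[OF \<alpha>] by simp
    also have "\<dots> = f x" using as0 fs0 phi_id[OF \<alpha>] hom_car[OF f x] by simp
    finally show ?thesis by simp
  qed
  thus ?thesis using hhom by blast
qed

end
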